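(* Let $\mathcal{H}=\mathbb{C}^d$ and consider a generalized Pauli dynamics $\{\Lambda_t\}_{t\ge0}$, i.e. one generated by a time-local generator $\mathcal{K}^{\mathrm{TCL}}_t=\sum_{\alpha=1}^{d+1}\gamma_\alpha(t)\mathcal{L}_\alpha$ with $\mathcal{L}_\alpha(\rho)=\frac1d\sum_{k=0}^{d-1}U_\alpha^k\rho\,U_\alpha^{k\dagger}-\rho$, where $U_1,\dots,U_{d+1}$ are unitaries whose eigenvector bases form $d+1$ mutually unbiased bases, and suppose it also satisfies $\frac{\mathrm{d}}{\mathrm{d}t}\Lambda_t=\int_0^t\mathrm{d}\tau\,\mathcal{K}^{\mathrm{NZ}}_{t-\tau}\Lambda_\tau$ for a memory kernel $\mathcal{K}^{\mathrm{NZ}}_t$. Write $\mathcal{K}^{\mathrm{TCL}}_t=\sum_\alpha m^{\mathrm{TCL}}_\alpha(t)\mathcal{M}_\alpha$ in its (time-independent) eigenbasis decomposition, let $G_\alpha(t)=\frac{\mathrm{d}}{\mathrm{d}t}\exp\!\left(\int_0^t m^{\mathrm{TCL}}_\alpha(\tau)\mathrm{d}\tau\right)$, and assume $|\widetilde{G_\alpha}(u)|<1$ for all $\alpha$. Let $m^{\mathrm{Red}}_\alpha(t)$ denote the eigenvalues of the Redfield-like generator $\mathcal{K}^{\mathrm{Red}}_t=\int_0^t\mathrm{d}\tau\,\mathcal{K}^{\mathrm{NZ}}_\tau=\sum_\alpha m^{\mathrm{Red}}_\alpha(t)\mathcal{M}_\alpha$. If $m^{\mathrm{Red}}_\alpha(t)>0$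 for some $\alpha$ and some $t\ge0$, then $\{\Lambda_t\}_{t\ge0}$ is not P-divisible.
   Context: Two orthonormal bases $\{e_i\},\{f_j\}$ of $\mathbb{C}^d$ are mutually unbiased if $|\langle e_i,f_j\rangle|^2=1/d$ for all $i,j$. For a map $\mathcal{M}_\alpha$ in the eigen-decomposition, $\mathcal{M}_\alpha(\omega)=\mathrm{Tr}[\varsigma_\alpha^\dagger\omega]\tau_\alpha$ with $\mathrm{Tr}[\varsigma_\alpha^\dagger\tau_\beta]=\delta_{\alpha\beta}$. A family $\{\Lambda_t\}$ is P-divisible if for all $t\ge s\ge0$, $\Lambda_t=V_{t,s}\Lambda_s$ with $V_{t,s}$ positive and trace-preserving. $\widetilde{G_\alpha}(u)$ is the Laplace transform of $G_\alpha$. *)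

theory Defs
  imports "HOL-Analysis.Analysis"
begin

type_synonym 'n cmat = "complex^'n^'n"
type_synonym 'n supop = "'n cmat \<Rightarrow> 'n cmat"

definition adj :: "'n::finite cmat \<Rightarrow> 'n cmat" where
  "adj X = (\<chi> i j. cnj (X $ j $ i))"

definition csmult :: "complex \<Rightarrow> 'n::finite cmat \<Rightarrow> 'n cmat" where
  "csmult c X = (\<chi> i j. c * X $ i $ j)"

definition cinner :: "complex^'n::finite \<Rightarrow> complex^'n \<Rightarrow> complex" where
  "cinner x y = (\<Sum>i\<in>UNIV. cnj (x $ i) * y $ i)"

definition ket_bra :: "complex^'n::finite \<Rightarrow> complex^'n \<Rightarrow> 'n cmat" where
  "ket_bra x y = (\<chi> i j. x $ i * cnj (y $ j))"

definition mpow :: "'n::finite cmat \<Rightarrow> nat \<Rightarrow> 'n cmat" where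
  "mpow U k = (((**) U) ^^ k) (mat 1)"

definition clinear_map :: "'n::finite supop \<Rightarrow> bool" where
  "clinear_map V \<longleftrightarrow> (\<forall>x y. V (x + y) = V x + V y) \<and> (\<forall>c x. V (csmult c x) = csmult c (V x))"

definition psd :: "'n::finite cmat \<Rightarrow> bool" where
  "psd X \<longleftrightarrow> adj X = X \<and> (\<forall>x. 0 \<le> Re (cinner x (X *v x)))"

definition positive_map :: "'n::finite supop \<Rightarrow> bool" where
  "positive_map V \<longleftrightarrow> (\<forall>X. psd X \<longrightarrow> psd (V X))"

definition trace_preserving :: "'n::finite supop \<Rightarrow> bool" where
  "trace_preserving V \<longleftrightarrow> (\<forall>X. trace (V X) = trace X)"

definition P_divisible :: "(real \<Rightarrow> 'n::finite supop) \<Rightarrow> bool" where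
  "P_divisible \<Lambda> \<longleftrightarrow> (\<forall>t s. 0 \<le> s \<and> s \<le> t \<longrightarrow>
     (\<exists>V. clinear_map V \<and> positive_map V \<and> trace_preserving V \<and> \<Lambda> t = V \<circ> \<Lambda> s))"

definition orthonormal_basis :: "(nat \<Rightarrow> complex^'n::finite) \<Rightarrow> bool" where
  "orthonormal_basis \<psi> \<longleftrightarrow> (\<forall>j<CARD('n). \<forall>k<CARD('n). cinner (\<psi> j) (\<psi> k) = (if j = k then 1 else 0))"

definition mutually_unbiased :: "(nat \<Rightarrow> complex^'n::finite) \<Rightarrow> (nat \<Rightarrow> complex^'n) \<Rightarrow> bool" where
  "mutually_unbiased e f \<longleftrightarrow> (\<forall>i<CARD('n). \<forall>j<CARD('n). (cmod (cinner (e i) (f j)))^2 = 1 / real CARD('n))"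

definition pauli_unitary :: "(nat \<Rightarrow> complex^'n::finite) \<Rightarrow> 'n cmat" where
  "pauli_unitary \<psi> = (\<Sum>k<CARD('n). csmult (cis (2 * pi / real CARD('n)) ^ k) (ket_bra (\<psi> k) (\<psi> k)))"

definition pauli_L :: "'n::finite cmat \<Rightarrow> 'n supop" where
  "pauli_L U \<rho> = csmult (1 / of_nat CARD('n)) (\<Sum>k<CARD('n). mpow U k ** \<rho> ** adj (mpow U k)) - \<rho>"

definition rank1_map :: "'n::finite cmat \<Rightarrow> 'n cmat \<Rightarrow> 'n supop" where
  "rank1_map \<sigma> \<tau> \<omega> = csmult (trace (adj \<sigma> ** \<omega>)) \<tau>"

end

theory Submission
  imports Defs
begin

lemma csmult_nth[simp]: "csmult c X $ i $ j = c * X $ i $ j"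
  by (simp add: csmult_def)
lemma adj_nth[simp]: "adj X $ i $ j = cnj (X $ j $ i)"
  by (simp add: adj_def)
lemma ket_bra_nth[simp]: "ket_bra x y $ i $ j = x $ i * cnj (y $ j)"
  by (simp add: ket_bra_def)

lemma hs_expand: "trace (adj S ** X) = (\<Sum>i\<in>UNIV. \<Sum>k\<in>UNIV. cnj (S $ k $ i) * X $ k $ i)"
  by (simp add: trace_def matrix_matrix_mult_def)

lemma hs_add: "trace (adj S ** (X + Y)) = trace (adj S ** X) + trace (adj S ** Y)"
  by (simp add: hs_expand sum.distrib distrib_left)
lemma hs_diff: "trace (adj S ** (X - Y)) = trace (adj S ** X) - trace (adj S ** Y)"
  by (simp add: hs_expand sum_subtractf right_diff_distrib)
lemma hs_csmult: "trace (adj S ** csmult c X) = c * trace (adj S ** X)"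
  by (simp add: hs_expand sum_distrib_left mult.left_commute)
lemma hs_csmult_left: "trace (adj (csmult c S) ** X) = cnj c * trace (adj S ** X)"
  by (simp add: hs_expand sum_distrib_left mult.assoc)

lemma adj_zero[simp]: "adj 0 = 0" by (simp add: vec_eq_iff adj_def)
lemma trace_zero[simp]: "trace (0::complex^'n::finite^'n) = 0" by (simp add: trace_def)
lemma hs_sum: "trace (adj S ** sum f A) = (\<Sum>a\<in>A. trace (adj S ** f a))"
  by (induction A rule: infinite_finite_induct) (auto simp: hs_add)
lemma hs_scaleR: "trace (adj S ** (r *\<^sub>R X)) = r *\<^sub>R trace (adj S ** X)"
  by (simp add: hs_expand scaleR_sum_right scaleR_conv_of_real[where 'a=complex] mult.left_commute sum_distrib_left)

lemma hs_linear: "linear (\<lambda>X. trace (adj S ** X))"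
  by (rule linearI) (simp_all add: hs_add hs_scaleR)

lemma hs_bounded_linear: "bounded_linear (\<lambda>X::'n::finite cmat. trace (adj S ** X))"
  using hs_linear linear_conv_bounded_linear by blast

lemma csmult_add: "csmult c (X + Y) = csmult c X + csmult c Y"
  by (simp add: vec_eq_iff distrib_left)
lemma csmult_diff: "csmult c (X - Y) = csmult c X - csmult c Y"
  by (simp add: vec_eq_iff right_diff_distrib)
lemma csmult_csmult[simp]: "csmult a (csmult b X) = csmult (a*b) X"
  by (simp add: vec_eq_iff)
lemma csmult_one[simp]: "csmult 1 X = X"
  by (simp add: vec_eq_iff)
lemma csmult_zero[simp]: "csmult 0 X = 0" "csmult c 0 = 0"
  by (simp_all add: vec_eq_iff)
lemma csmult_add_left: "csmult (a + b) X = csmult a X + csmult b X"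
  by (simp add: vec_eq_iff distrib_right)
lemma csmult_sum: "csmult c (sum f A) = (\<Sum>a\<in>A. csmult c (f a))"
  by (induction A rule: infinite_finite_induct) (auto simp: csmult_add)
lemma csmult_sum_left: "csmult (sum f A) X = (\<Sum>a\<in>A. csmult (f a) X)"
  by (induction A rule: infinite_finite_induct) (auto simp: csmult_add_left)
lemma csmult_of_real: "csmult (of_real r) X = r *\<^sub>R X"
  by (simp add: vec_eq_iff scaleR_conv_of_real[where 'a=complex])

lemma adj_adj[simp]: "adj (adj X) = X" by (simp add: vec_eq_iff)
lemma adj_add: "adj (X + Y) = adj X + adj Y" by (simp add: vec_eq_iff)
lemma adj_diff: "adj (X - Y) = adj X - adj Y" by (simp add: vec_eq_iff)
lemma adj_csmult: "adj (csmult c X) = csmult (cnj c) (adj X)" by (simp add: vec_eq_iff)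
lemma adj_sum: "adj (sum f A) = (\<Sum>a\<in>A. adj (f a))"
  by (induction A rule: infinite_finite_induct) (auto simp: adj_add)
lemma adj_mult: "adj (X ** Y) = adj Y ** adj X"
  by (simp add: vec_eq_iff matrix_matrix_mult_def mult.commute)
lemma adj_mat1[simp]: "adj (mat 1) = mat 1"
  by (simp add: vec_eq_iff mat_def)

lemma kb_mult: "ket_bra a b ** ket_bra c e = csmult (cinner b c) (ket_bra a e)"
  by (simp add: vec_eq_iff matrix_matrix_mult_def cinner_def sum_distrib_left sum_distrib_right mult_ac)
lemma csmult_mult_left: "csmult a X ** Y = csmult a (X ** Y)"
  by (simp add: vec_eq_iff matrix_matrix_mult_def sum_distrib_left mult_ac)
lemma csmult_mult_right: "X ** csmult a Y = csmult a (X ** Y)"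
  by (simp add: vec_eq_iff matrix_matrix_mult_def sum_distrib_left mult_ac)
lemma matrix_add_rdistrib': "((B::complex^'n::finite^'m::finite) + C) ** (A::complex^'p::finite^'n) = B ** A + C ** A"
  by (simp add: vec_eq_iff matrix_matrix_mult_def sum.distrib distrib_right)
lemma sum_mult_left: "sum (f::_\<Rightarrow>'n::finite cmat) A ** (Y::'n::finite cmat) = (\<Sum>a\<in>A. f a ** Y)"
  by (induction A rule: infinite_finite_induct) (auto simp: matrix_add_rdistrib')
lemma sum_mult_right: "(Y::'n::finite cmat) ** sum (f::_\<Rightarrow>'n::finite cmat) A = (\<Sum>a\<in>A. Y ** f a)"
  by (induction A rule: infinite_finite_induct) (auto simp: matrix_add_ldistrib)
lemma adj_kb: "adj (ket_bra a a) = ket_bra a a"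
  by (simp add: vec_eq_iff mult.commute)

lemma mpow_Suc: "mpow U (Suc k) = U ** mpow U k"
  by (simp add: mpow_def)
lemma mpow_0: "mpow U 0 = mat 1"
  by (simp add: mpow_def)

lemma omega_pow_d: "cis (2 * pi / real n) ^ n = 1" if "n > 0"
proof -
  have "cis (2 * pi / real n) ^ n = cis (real n * (2 * pi / real n))" by (rule Complex.DeMoivre)
  also have "real n * (2 * pi / real n) = 2 * pi" using that by simp
  finally show ?thesis by simp
qed

lemma pauli_mpow:
  assumes onb: "orthonormal_basis (\<psi> :: nat \<Rightarrow> complex^'n::finite)"
  shows "mpow (pauli_unitary \<psi>) (Suc k) =
    (\<Sum>j<CARD('n). csmult ((cis (2 * pi / real CARD('n)) ^ j) ^ Suc k) (ket_bra (\<psi> j) (\<psi> j)))"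
proof (induction k)
  case 0
  then show ?case by (simp add: mpow_def pauli_unitary_def)
next
  case (Suc k)
  define w where "w = cis (2 * pi / real CARD('n))"
  have "mpow (pauli_unitary \<psi>) (Suc (Suc k)) = pauli_unitary \<psi> ** mpow (pauli_unitary \<psi>) (Suc k)"
    by (rule mpow_Suc)
  also have "\<dots> = pauli_unitary \<psi> ** (\<Sum>j<CARD('n). csmult ((w ^ j) ^ Suc k) (ket_bra (\<psi> j) (\<psi> j)))"
    unfolding Suc w_def ..
  also have "\<dots> = (\<Sum>j<CARD('n). \<Sum>l<CARD('n). csmult (w^j * (w ^ l) ^ Suc k * cinner (\<psi> j) (\<psi> l)) (ket_bra (\<psi> j) (\<psi> l)))"
    unfolding pauli_unitary_def w_def[symmetric]
    apply (simp add: sum_mult_left sum_mult_right csmult_mult_left csmult_mult_right kb_mult csmult_sum)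
    apply (subst sum.swap)
    apply (simp add: mult_ac)
    done
  also have "\<dots> = (\<Sum>j<CARD('n). csmult ((w ^ j) ^ Suc (Suc k)) (ket_bra (\<psi> j) (\<psi> j)))"
  proof (rule sum.cong[OF refl])
    fix j assume j: "j \<in> {..<CARD('n)}"
    have "(\<Sum>l<CARD('n). csmult (w^j * (w ^ l) ^ Suc k * cinner (\<psi> j) (\<psi> l)) (ket_bra (\<psi> j) (\<psi> l)))
       = (\<Sum>l<CARD('n). if l = j then csmult (w^j * (w ^ l) ^ Suc k) (ket_bra (\<psi> j) (\<psi> l)) else 0)"
      using onb j unfolding orthonormal_basis_def by (intro sum.cong) auto
    also have "\<dots> = csmult ((w ^ j) ^ Suc (Suc k)) (ket_bra (\<psi> j) (\<psi> j))"
      using j by (simp add: sum.delta' mult_ac)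
    finally show "(\<Sum>l<CARD('n). csmult (w^j * (w ^ l) ^ Suc k * cinner (\<psi> j) (\<psi> l)) (ket_bra (\<psi> j) (\<psi> l)))
       = csmult ((w ^ j) ^ Suc (Suc k)) (ket_bra (\<psi> j) (\<psi> j))" .
  qed
  finally show ?case unfolding w_def .
qed

lemma pauli_adj_mpow:
  assumes onb: "orthonormal_basis (\<psi> :: nat \<Rightarrow> complex^'n::finite)" and k: "k < CARD('n)"
  shows "adj (mpow (pauli_unitary \<psi>) k) = mpow (pauli_unitary \<psi>) ((CARD('n) - k) mod CARD('n))"
proof (cases k)
  case 0
  then show ?thesis by (simp add: mpow_0)
next
  case (Suc k')
  define d where "d = CARD('n)"
  define w where "w = cis (2 * pi / real d)"
  have d0: "d > 0" by (simp add: d_def)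
  define r where "r = d - k - 1"
  have r1: "d - k = Suc r" using k Suc unfolding d_def[symmetric] r_def by simp
  have r: "d - k = Suc r" "(d - k) mod d = Suc r"
    using r1 Suc by (auto intro!: mod_less)
  have key: "cnj ((w ^ j) ^ Suc k') = (w ^ j) ^ Suc r" for j
  proof -
    have wn: "cmod w = 1" by (simp add: w_def)
    have wd: "w ^ d = 1" using d0 by (simp add: w_def omega_pow_d)
    have kk: "Suc k' + Suc r = d" using r Suc k unfolding d_def[symmetric] by simp
    have "(w ^ j) ^ Suc k' * (w ^ j) ^ Suc r = (w ^ j) ^ d"
      by (simp only: power_add[symmetric] kk)
    also have "\<dots> = (w ^ d) ^ j" by (simp only: power_mult[symmetric] mult.commute)
    finally have "(w ^ j) ^ Suc k' * (w ^ j) ^ Suc r = (w ^ d) ^ j" .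
    then have e1: "(w ^ j) ^ Suc k' * (w ^ j) ^ Suc r = 1" using wd by simp
    have n1: "cmod ((w ^ j) ^ Suc k') = 1" using wn by (simp only: norm_power power_one)
    have e2: "cnj ((w ^ j) ^ Suc k') * (w ^ j) ^ Suc k' = 1"
      using n1 complex_norm_square[of "(w ^ j) ^ Suc k'"] by (simp add: mult.commute)
    define X where "X = (w ^ j) ^ Suc k'"
    define Y where "Y = (w ^ j) ^ Suc r"
    have "cnj X = cnj X * (X * Y)" using e1 by (simp add: X_def Y_def)
    also have "\<dots> = (cnj X * X) * Y" by (simp only: mult.assoc)
    also have "\<dots> = Y" using e2 by (simp add: X_def)
    finally show ?thesis by (simp add: X_def Y_def)
  qed
  have "adj (mpow (pauli_unitary \<psi>) k) = (\<Sum>j<d. csmult (cnj ((w ^ j) ^ Suc k')) (ket_bra (\<psi> j) (\<psi> j)))"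
    unfolding Suc pauli_mpow[OF onb] d_def w_def
    by (simp add: adj_sum adj_csmult adj_kb)
  also have "\<dots> = (\<Sum>j<d. csmult ((w ^ j) ^ Suc r) (ket_bra (\<psi> j) (\<psi> j)))"
    by (simp only: key)
  also have "\<dots> = mpow (pauli_unitary \<psi>) (Suc r)"
    unfolding pauli_mpow[OF onb] d_def w_def ..
  also have "\<dots> = mpow (pauli_unitary \<psi>) ((d - k) mod d)"
    using r by simp
  finally show ?thesis unfolding d_def .
qed

definition hs_sa :: "'n::finite supop \<Rightarrow> bool" where
  "hs_sa F \<longleftrightarrow> (\<forall>A B. trace (adj A ** F B) = trace (adj (F A) ** B))"

lemma hs_sum_left: "trace (adj (sum f S) ** X) = (\<Sum>a\<in>S. trace (adj (f a) ** X))"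
  by (induction S rule: infinite_finite_induct)
     (auto simp: adj_sum adj_add matrix_add_rdistrib' trace_add)

lemma hs_conj: "trace (adj X ** (W ** \<rho> ** adj W)) = trace (adj (adj W ** X ** W) ** (\<rho>::'n::finite cmat))"
proof -
  have "trace (adj (adj W ** X ** W) ** \<rho>) = trace (adj W ** (adj X ** W ** \<rho>))"
    by (simp add: adj_mult matrix_mul_assoc)
  also have "\<dots> = trace ((adj X ** W ** \<rho>) ** adj W)" by (rule trace_mul_sym)
  also have "\<dots> = trace (adj X ** (W ** \<rho> ** adj W))" by (simp add: matrix_mul_assoc)
  finally show ?thesis by simp
qed

lemma mod_aux: "(b::nat) < d \<Longrightarrow> (d - (d - b) mod d) mod d = b"
  by (cases "b = 0") auto

lemma hs_diff_left: "trace (adj (X - Y) ** Z) = trace (adj X ** Z) - trace (adj (Y::'n::finite cmat) ** Z)"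
  by (simp add: hs_expand sum_subtractf left_diff_distrib)

lemma reindex_mod:
  fixes d :: nat assumes "d > 0"
  shows "(\<Sum>k<d. f ((d - k) mod d)) = (\<Sum>k<d. f k)"
proof (rule sum.reindex_bij_witness[where i="\<lambda>k. (d - k) mod d" and j="\<lambda>k. (d - k) mod d"])
  fix k assume k: "k \<in> {..<d}"
  show "(d - (d - k) mod d) mod d = k"
    using k assms by (cases "k = 0") auto
  show "(d - k) mod d \<in> {..<d}" using assms by simp
qed (auto simp: mod_aux)

lemma pauli_Phi_sa:
  assumes onb: "orthonormal_basis (\<psi> :: nat \<Rightarrow> complex^'n::finite)"
  defines "W \<equiv> mpow (pauli_unitary \<psi>)"
  shows "trace (adj A ** (\<Sum>k<CARD('n). W k ** \<rho> ** adj (W k)))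
       = trace (adj (\<Sum>k<CARD('n). W k ** A ** adj (W k)) ** \<rho>)"
proof -
  define d where "d = CARD('n)"
  have d0: "d > 0" by (simp add: d_def)
  have aw: "adj (W k) = W ((d - k) mod d)" if "k < d" for k
    using pauli_adj_mpow[OF onb] that unfolding W_def d_def by blast
  have wa: "W k = adj (W ((d - k) mod d))" if "k < d" for k
  proof -
    have "adj (W ((d - k) mod d)) = W ((d - (d - k) mod d) mod d)"
      using aw d0 by simp
    also have "(d - (d - k) mod d) mod d = k" using that d0 by (cases "k = 0") auto
    finally show ?thesis by simp
  qed
  have "trace (adj A ** (\<Sum>k<d. W k ** \<rho> ** adj (W k))) = (\<Sum>k<d. trace (adj (adj (W k) ** A ** W k) ** \<rho>))"
    by (simp add: hs_sum hs_conj)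
  also have "\<dots> = trace (adj (\<Sum>k<d. adj (W k) ** A ** W k) ** \<rho>)"
    by (simp add: hs_sum_left)
  also have "(\<Sum>k<d. adj (W k) ** A ** W k) = (\<Sum>k<d. W ((d - k) mod d) ** A ** adj (W ((d - k) mod d)))"
  proof (rule sum.cong[OF refl])
    fix k assume "k \<in> {..<d}"
    then have k: "k < d" by simp
    note e1 = aw[OF k] and e2 = wa[OF k]
    show "adj (W k) ** A ** W k = W ((d - k) mod d) ** A ** adj (W ((d - k) mod d))"
      by (simp only: e2 adj_adj)
  qed
  also have "\<dots> = (\<Sum>k<d. W k ** A ** adj (W k))"
    using reindex_mod[OF d0, of "\<lambda>k. W k ** A ** adj (W k)"] by simp
  finally show ?thesis unfolding d_def .
qed

lemma pauli_L_sa: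
  assumes onb: "orthonormal_basis (\<psi> :: nat \<Rightarrow> complex^'n::finite)"
  shows "hs_sa (pauli_L (pauli_unitary \<psi>))"
  unfolding hs_sa_def
proof (intro allI)
  fix A B :: "'n cmat"
  have c: "cnj (1 / of_nat CARD('n)) = (1 / of_nat CARD('n) :: complex)" by simp
  show "trace (adj A ** pauli_L (pauli_unitary \<psi>) B) = trace (adj (pauli_L (pauli_unitary \<psi>) A) ** B)"
    unfolding pauli_L_def
    using pauli_Phi_sa[OF onb, of A B]
    by (simp add: hs_diff hs_diff_left hs_csmult hs_csmult_left)
qed

lemma cinner_add_left: "cinner (x + y) z = cinner x z + cinner y z"
  by (simp add: cinner_def sum.distrib distrib_right)
lemma cinner_add_right: "cinner z (x + y) = cinner z x + cinner z y"
  by (simp add: cinner_def sum.distrib distrib_left)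
lemma cinner_axis_left: "cinner (axis i a) v = cnj a * v $ i"
proof -
  have "(\<Sum>l\<in>UNIV. cnj (axis i a $ l) * v $ l) = (\<Sum>l\<in>UNIV. if l = i then cnj a * v$i else 0)"
    by (rule sum.cong) (auto simp: axis_def)
  also have "\<dots> = cnj a * v $ i" by simp
  finally show ?thesis unfolding cinner_def .
qed
lemma mv_axis: "(Y *v axis j b) $ a = Y $ a $ j * b"
  by (simp add: matrix_vector_mult_def axis_def if_distrib cong: if_cong)

lemma quad_two:
  "cinner (axis i a + axis j b) (Y *v (axis i a + axis j b)) =
     cnj a * (Y$i$i * a) + cnj a * (Y$i$j * b) + cnj b * (Y$j$i * a) + cnj b * (Y$j$j * b)"
  by (simp add: cinner_add_left cinner_add_right matrix_vector_right_distrib cinner_axis_left mv_axis)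

lemma quad_one: "cinner (axis i a) (Y *v axis i a) = cnj a * (Y$i$i * a)"
  by (simp add: cinner_axis_left mv_axis)

lemma psd_diag: assumes "psd Y" shows "Im (Y$i$i) = 0" "Re (Y$i$i) \<ge> 0"
proof -
  have "adj Y = Y" using assms by (simp add: psd_def)
  then have "cnj (Y$i$i) = Y$i$i" by (metis adj_nth)
  then show "Im (Y$i$i) = 0" by (metis Reals_cnj_iff complex_is_Real_iff)
  have "0 \<le> Re (cinner (axis i 1) (Y *v axis i 1))" using assms by (simp add: psd_def)
  then show "Re (Y$i$i) \<ge> 0" by (simp add: quad_one)
qed

lemma psd_offdiag: assumes "psd Y" "i \<noteq> j" shows "2 * cmod (Y$i$j) \<le> Re (Y$i$i) + Re (Y$j$j)"
proof (cases "Y$i$j = 0")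
  case True then show ?thesis using psd_diag[OF assms(1)] by simp
next
  case False
  define w where "w = - cnj (Y$i$j) / cmod (Y$i$j)"
  have adjY: "adj Y = Y" using assms by (simp add: psd_def)
  then have yji: "Y$j$i = cnj (Y$i$j)" by (metis adj_nth complex_cnj_cnj)
  have nz: "cmod (Y$i$j) \<noteq> 0" using False by simp
  have w1: "cnj w * w = 1"
    using nz by (simp add: w_def complex_norm_square[symmetric] field_simps power2_eq_square)
  have t1: "Y$i$j * w = - cmod (Y$i$j)"
    using nz by (simp add: w_def complex_norm_square[symmetric] field_simps power2_eq_square)
  have t2: "cnj w * Y$j$i = - cmod (Y$i$j)"
    using t1 yji by (metis complex_cnj_cnj complex_cnj_complex_of_real complex_cnj_minus complex_cnj_mult mult.commute)
  have "0 \<le> Re (cinner (axis i 1 + axis j w) (Y *v (axis i 1 + axis j w)))"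
    using assms by (simp add: psd_def)
  also have "cinner (axis i 1 + axis j w) (Y *v (axis i 1 + axis j w)) = Y$i$i + Y$i$j * w + cnj w * Y$j$i + (cnj w * w) * Y$j$j"
    by (simp add: quad_two mult_ac)
  also have "\<dots> = Y$i$i - 2 * cmod (Y$i$j) + Y$j$j"
    using t1 t2 w1 by simp
  finally show ?thesis by simp
qed

lemma psd_entry_bound: assumes "psd Y" shows "cmod (Y$i$j) \<le> Re (trace Y)"
proof -
  have d: "Re (Y$k$k) \<le> Re (trace Y)" for k
  proof -
    have "Re (trace Y) = (\<Sum>l\<in>UNIV. Re (Y$l$l))" by (simp add: trace_def)
    also have "\<dots> \<ge> Re (Y$k$k)"
      using psd_diag[OF assms] by (intro member_le_sum) auto
    finally show ?thesis .
  qed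
  show ?thesis
  proof (cases "i = j")
    case True
    have "Y$i$i = complex_of_real (Re (Y$i$i))" using psd_diag[OF assms] by (simp add: complex_eq_iff)
    then have "cmod (Y$i$i) = Re (Y$i$i)" using psd_diag[OF assms, of i]
      by (metis abs_of_nonneg norm_of_real)
    then show ?thesis using True d by simp
  next
    case False
    then show ?thesis using psd_offdiag[OF assms False] d[of i] d[of j] by linarith
  qed
qed

lemma mat_mv: "(mat c *v x) $ i = c * x $ i"
proof -
  have "(\<Sum>j\<in>UNIV. mat c $ i $ j * x $ j) = (\<Sum>j\<in>UNIV. if j = i then c * x $ i else 0)"
    by (rule sum.cong) (auto simp: mat_def)
  then show ?thesis by (simp add: matrix_vector_mult_def)
qed

lemma cnj_mult_self: "cnj z * z = complex_of_real ((cmod z)^2)"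
  using complex_norm_square[of z] by (simp only: mult.commute)
lemma cinner_self: "cinner x x = complex_of_real (\<Sum>k\<in>UNIV. (cmod (x $ k))^2)"
  unfolding cinner_def of_real_sum by (rule sum.cong) (simp_all only: cnj_mult_self)

lemma quad_add: "cinner x ((A + B) *v x) = cinner x (A *v x) + cinner x (B *v x)"
  by (simp add: matrix_vector_mult_add_rdistrib cinner_add_right)
lemma quad_diff: "cinner x ((A - B) *v x) = cinner x (A *v x) - cinner x (B *v x)"
  by (simp add: cinner_def matrix_vector_mult_def sum_subtractf right_diff_distrib left_diff_distrib)
lemma quad_csmult: "cinner x (csmult a A *v x) = a * cinner x (A *v x)"
  by (simp add: cinner_def matrix_vector_mult_def sum_distrib_left mult_ac)
lemma quad_mat: "cinner x (mat c *v x) = c * cinner x x"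
  by (simp add: cinner_def mat_mv sum_distrib_left mult_ac)

lemma prod_le_N: "cmod (x$i) * cmod (x$j) \<le> (\<Sum>k\<in>UNIV. (cmod (x $ k))^2)"
proof -
  define m where "m = max (cmod (x$i)) (cmod (x$j))"
  have "cmod (x$i) * cmod (x$j) \<le> m * m"
    unfolding m_def by (intro mult_mono) (auto simp: le_max_iff_disj)
  also have "m * m \<le> (\<Sum>k\<in>UNIV. (cmod (x $ k))^2)"
  proof -
    have "m * m = (cmod (x$i))^2 \<or> m * m = (cmod (x$j))^2" unfolding m_def by (auto simp: max_def power2_eq_square)
    moreover have "(cmod (x$l))^2 \<le> (\<Sum>k\<in>UNIV. (cmod (x $ k))^2)" for l
      by (rule member_le_sum) auto
    ultimately show ?thesis by metis
  qed
  finally show ?thesis .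
qed

lemma quad_bound:
  "cmod (cinner x (H *v x)) \<le> (\<Sum>i\<in>UNIV. \<Sum>j\<in>UNIV. cmod (H$i$j)) * (\<Sum>k\<in>UNIV. (cmod (x $ k))^2)"
proof -
  define N where "N = (\<Sum>k\<in>UNIV. (cmod (x $ k))^2)"
  have "cmod (cinner x (H *v x)) = cmod (\<Sum>i\<in>UNIV. cnj (x$i) * (\<Sum>j\<in>UNIV. H$i$j * x$j))"
    by (simp add: cinner_def matrix_vector_mult_def)
  also have "\<dots> \<le> (\<Sum>i\<in>UNIV. cmod (cnj (x$i) * (\<Sum>j\<in>UNIV. H$i$j * x$j)))"
    by (rule norm_sum)
  also have "\<dots> \<le> (\<Sum>i\<in>UNIV. \<Sum>j\<in>UNIV. cmod (H$i$j) * N)"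
  proof (rule sum_mono)
    fix i :: 'a
    have "cmod (cnj (x$i) * (\<Sum>j\<in>UNIV. H$i$j * x$j)) = cmod (x$i) * cmod (\<Sum>j\<in>UNIV. H$i$j * x$j)"
      by (simp add: norm_mult)
    also have "\<dots> \<le> cmod (x$i) * (\<Sum>j\<in>UNIV. cmod (H$i$j) * cmod (x$j))"
      by (intro mult_left_mono) (auto intro: order_trans[OF norm_sum] simp: norm_mult)
    also have "\<dots> = (\<Sum>j\<in>UNIV. cmod (H$i$j) * (cmod (x$i) * cmod (x$j)))"
      by (simp add: sum_distrib_left mult_ac)
    also have "\<dots> \<le> (\<Sum>j\<in>UNIV. cmod (H$i$j) * N)"
      unfolding N_def by (intro sum_mono mult_left_mono prod_le_N) auto
    finally show "cmod (cnj (x$i) * (\<Sum>j\<in>UNIV. H$i$j * x$j)) \<le> (\<Sum>j\<in>UNIV. cmod (H$i$j) * N)" .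
  qed
  also have "\<dots> = (\<Sum>i\<in>UNIV. \<Sum>j\<in>UNIV. cmod (H$i$j)) * N"
    by (simp add: sum_distrib_right)
  finally show ?thesis unfolding N_def .
qed

lemma adj_mat_real: "adj (mat (complex_of_real c)) = mat (complex_of_real c)"
  by (simp add: vec_eq_iff mat_def)

lemma psd_shift:
  assumes H: "adj H = H" and c: "c \<ge> (\<Sum>i\<in>UNIV. \<Sum>j\<in>UNIV. cmod (H$i$j))"
  shows "psd (mat (complex_of_real c) + H)" "psd (mat (complex_of_real c) - H)"
proof -
  have b: "\<bar>Re (cinner x (H *v x))\<bar> \<le> c * (\<Sum>k\<in>UNIV. (cmod (x $ k))^2)" for x
  proof -
    have "\<bar>Re (cinner x (H *v x))\<bar> \<le> cmod (cinner x (H *v x))" by (rule abs_Re_le_cmod)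
    also have "\<dots> \<le> (\<Sum>i\<in>UNIV. \<Sum>j\<in>UNIV. cmod (H$i$j)) * (\<Sum>k\<in>UNIV. (cmod (x $ k))^2)"
      by (rule quad_bound)
    also have "\<dots> \<le> c * (\<Sum>k\<in>UNIV. (cmod (x $ k))^2)"
      using c by (intro mult_right_mono) (auto intro: sum_nonneg)
    finally show ?thesis .
  qed
  show "psd (mat (complex_of_real c) + H)"
    unfolding psd_def
  proof (intro conjI allI)
    show "adj (mat (complex_of_real c) + H) = mat (complex_of_real c) + H"
      by (simp add: adj_add adj_mat_real H)
    fix x
    show "0 \<le> Re (cinner x ((mat (complex_of_real c) + H) *v x))"
      using b[of x] by (simp add: quad_add quad_mat cinner_self)
  qed
  show "psd (mat (complex_of_real c) - H)"
    unfolding psd_def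
  proof (intro conjI allI)
    show "adj (mat (complex_of_real c) - H) = mat (complex_of_real c) - H"
      by (simp add: adj_diff adj_mat_real H)
    fix x
    show "0 \<le> Re (cinner x ((mat (complex_of_real c) - H) *v x))"
      using b[of x] by (simp add: quad_diff quad_mat cinner_self)
  qed
qed

lemma psd_id: "psd (mat 1)"
proof -
  have "psd (mat (complex_of_real 1) + 0)"
    by (rule psd_shift) (auto simp: adj_def vec_eq_iff)
  then show ?thesis by (simp add: psd_def)
qed

lemma minus_as_csmult: "X - Y = X + csmult (-1) (Y::'n::finite cmat)"
  by (simp add: vec_eq_iff)

lemma clin_add: "clinear_map V \<Longrightarrow> V (x + y) = V x + V y"
  by (simp add: clinear_map_def)
lemma clin_csmult: "clinear_map V \<Longrightarrow> V (csmult c x) = csmult c (V x)"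
  by (simp add: clinear_map_def)
lemma clin_diff: "clinear_map V \<Longrightarrow> V (x - y) = V x - V y"
  by (simp add: clinear_map_def minus_as_csmult)
lemma clin_zero: "clinear_map V \<Longrightarrow> V 0 = 0"
  using clin_diff[of V 0 0] by simp

lemma mat_real_csmult: "mat (complex_of_real c) = csmult (complex_of_real c) (mat 1)"
  by (simp add: vec_eq_iff mat_def)

lemma herm_pres:
  assumes V: "clinear_map V" "positive_map V" and H: "adj H = H"
  shows "adj (V H) = V H"
proof -
  define c where "c = (\<Sum>i\<in>UNIV. \<Sum>j\<in>UNIV. cmod (H$i$j))"
  have p1: "psd (mat (complex_of_real c) + H)" by (rule psd_shift(1)[OF H]) (simp add: c_def)
  have a1: "adj (V (mat (complex_of_real c) + H)) = V (mat (complex_of_real c) + H)"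
    using p1 V(2) unfolding positive_map_def psd_def by blast
  have a2: "adj (V (mat 1)) = V (mat 1)"
    using psd_id V(2) unfolding positive_map_def psd_def by blast
  have "V H = V (mat (complex_of_real c) + H) - csmult (complex_of_real c) (V (mat 1))"
    using V(1) by (simp add: clin_add clin_csmult mat_real_csmult)
  then show ?thesis using a1 a2 by (simp add: adj_diff adj_csmult)
qed

lemma adj_pres:
  assumes V: "clinear_map V" "positive_map V"
  shows "V (adj X) = adj (V X)"
proof -
  define H1 where "H1 = csmult (1/2) (X + adj X)"
  define H2 where "H2 = csmult (-\<i>/2) (X - adj X)"
  have h1: "adj H1 = H1" by (simp add: H1_def vec_eq_iff add.commute)
  have h2: "adj H2 = H2" by (simp add: H2_def vec_eq_iff field_simps)
  have x: "X = H1 + csmult \<i> H2" by (simp add: H1_def H2_def vec_eq_iff field_simps)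
  have ax: "adj X = H1 + csmult (-\<i>) H2" by (simp add: H1_def H2_def vec_eq_iff field_simps)
  have "V (adj X) = V H1 + csmult (-\<i>) (V H2)" by (simp add: ax clin_add[OF V(1)] clin_csmult[OF V(1)])
  also have "\<dots> = adj (V H1 + csmult \<i> (V H2))"
    using herm_pres[OF V h1] herm_pres[OF V h2] by (simp add: adj_add adj_csmult)
  also have "V H1 + csmult \<i> (V H2) = V X"
    by (subst x) (simp add: clin_add[OF V(1)] clin_csmult[OF V(1)])
  finally show ?thesis .
qed

lemma iter_props:
  assumes V: "clinear_map V" "positive_map V" "trace_preserving V"
  shows "clinear_map (V ^^ n) \<and> positive_map (V ^^ n) \<and> trace_preserving (V ^^ n)"
proof (induction n)
  case 0
  then show ?case by (simp add: clinear_map_def positive_map_def trace_preserving_def)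
next
  case (Suc n)
  then show ?case using V
    by (simp add: clinear_map_def positive_map_def trace_preserving_def)
qed

lemma iter_eig:
  assumes "V H = csmult \<mu> H"  "clinear_map V"
  shows "(V ^^ n) H = csmult (\<mu> ^ n) H"
  by (induction n) (simp_all add: assms clin_csmult mult.commute)

lemma herm_nonzero_quad:
  assumes H: "adj H = H" and nz: "H \<noteq> 0"
  shows "\<exists>x. Re (cinner x (H *v x)) \<noteq> 0"
proof (cases "\<exists>k. H$k$k \<noteq> 0")
  case True
  then obtain k where k: "H$k$k \<noteq> 0" by blast
  have "cnj (H$k$k) = H$k$k" using H by (metis adj_nth)
  then have "Im (H$k$k) = 0" by (metis Reals_cnj_iff complex_is_Real_iff)
  then have "Re (H$k$k) \<noteq> 0" using k by (simp add: complex_eq_iff)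
  then show ?thesis by (intro exI[of _ "axis k 1"]) (simp add: quad_one)
next
  case False
  then have diag: "H$k$k = 0" for k by blast
  obtain i j where ij: "H$i$j \<noteq> 0" using nz by (metis vec_eq_iff zero_index)
  then have "i \<noteq> j" using diag by blast
  have hji: "H$j$i = cnj (H$i$j)" using H by (metis adj_nth complex_cnj_cnj)
  define w where "w = cnj (H$i$j)"
  have "cinner (axis i 1 + axis j w) (H *v (axis i 1 + axis j w)) = H$i$j * cnj (H$i$j) + cnj (H$i$j) * H$i$j"
    by (simp add: quad_two diag hji w_def)
  also have "\<dots> = 2 * (H$i$j * cnj (H$i$j))" by (simp add: mult.commute)
  also have "H$i$j * cnj (H$i$j) = complex_of_real ((cmod (H$i$j))^2)"
    using cnj_mult_self[of "H$i$j"] by (simp only: mult.commute)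
  finally have "Re (cinner (axis i 1 + axis j w) (H *v (axis i 1 + axis j w))) = 2 * (cmod (H$i$j))^2"
    by simp
  then show ?thesis using ij by (intro exI[of _ "axis i 1 + axis j w"]) simp
qed

lemma eig_le1_herm:
  assumes V: "clinear_map V" "positive_map V" "trace_preserving V"
    and H: "adj H = H" "H \<noteq> 0" and eig: "V H = csmult (complex_of_real \<mu>) H"
  shows "\<mu> \<le> 1"
proof (rule ccontr)
  assume "\<not> \<mu> \<le> 1"
  then have mu: "\<mu> > 1" by simp
  obtain x where x: "Re (cinner x (H *v x)) \<noteq> 0" using herm_nonzero_quad[OF H] by blast
  define h where "h = \<bar>Re (cinner x (H *v x))\<bar>"
  have h0: "h > 0" using x by (simp add: h_def)
  define c where "c = (\<Sum>i\<in>UNIV. \<Sum>j\<in>UNIV. cmod (H$i$j))"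
  have c0: "c \<ge> 0" by (simp add: c_def sum_nonneg)
  define N where "N = (\<Sum>k\<in>UNIV. (cmod (x $ k))^2)"
  define D where "D = real CARD('a)"
  define B where "B = c * ((\<Sum>i\<in>(UNIV::'a set). \<Sum>j\<in>(UNIV::'a set). D) * N)"
  have bound: "\<mu> ^ n * h \<le> B" for n
  proof -
    note P = iter_props[OF V, of n]
    let ?W = "V ^^ n"
    define Y where "Y = ?W (mat 1)"
    have Ypsd: "psd Y" using P psd_id unfolding positive_map_def Y_def by blast
    have trY: "trace Y = of_nat CARD('a)"
      using P by (simp add: trace_preserving_def Y_def trace_I)
    have WH: "?W H = csmult (complex_of_real (\<mu> ^ n)) H"
      using iter_eig[OF eig V(1), of n] by simp
    have Wc: "?W (mat (complex_of_real c)) = csmult (complex_of_real c) Y"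
      using P by (simp add: mat_real_csmult clin_csmult Y_def)
    have s1: "psd (mat (complex_of_real c) + H)" by (rule psd_shift(1)[OF H(1)]) (simp add: c_def)
    have s2: "psd (mat (complex_of_real c) - H)" by (rule psd_shift(2)[OF H(1)]) (simp add: c_def)
    have "psd (?W (mat (complex_of_real c) + H))" using P s1 unfolding positive_map_def by blast
    then have p1: "psd (csmult (complex_of_real c) Y + csmult (complex_of_real (\<mu> ^ n)) H)"
      using P WH Wc by (simp add: clin_add)
    have "psd (?W (mat (complex_of_real c) - H))" using P s2 unfolding positive_map_def by blast
    then have p2: "psd (csmult (complex_of_real c) Y - csmult (complex_of_real (\<mu> ^ n)) H)"
      using P WH Wc by (simp add: clin_diff)
    have q1: "0 \<le> c * Re (cinner x (Y *v x)) + \<mu> ^ n * Re (cinner x (H *v x))"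
      using p1 unfolding psd_def by (simp add: quad_add quad_csmult)
    have q2: "0 \<le> c * Re (cinner x (Y *v x)) - \<mu> ^ n * Re (cinner x (H *v x))"
      using p2 unfolding psd_def by (simp add: quad_diff quad_csmult)
    have "\<mu> ^ n * h \<le> c * Re (cinner x (Y *v x))"
      using q1 q2 unfolding h_def by (cases "Re (cinner x (H *v x)) \<ge> 0") (auto simp: abs_if)
    also have "\<dots> \<le> c * cmod (cinner x (Y *v x))"
      using c0 by (intro mult_left_mono) (auto simp: complex_Re_le_cmod)
    also have "\<dots> \<le> c * ((\<Sum>i\<in>UNIV. \<Sum>j\<in>UNIV. cmod (Y$i$j)) * N)"
      using c0 unfolding N_def by (intro mult_left_mono quad_bound) auto
    also have "\<dots> \<le> B"
      unfolding B_def using c0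
      by (intro mult_left_mono mult_right_mono sum_mono)
         (auto simp: N_def D_def sum_nonneg intro: order_trans[OF psd_entry_bound[OF Ypsd]] simp: trY)
    finally show ?thesis .
  qed
  obtain n where "B / h < \<mu> ^ n" using real_arch_pow[OF mu] by blast
  then have "B < \<mu> ^ n * h" using h0 by (simp add: field_simps)
  with bound[of n] show False by simp
qed

lemma eig_le1:
  assumes V: "clinear_map V" "positive_map V" "trace_preserving V"
    and X: "X \<noteq> 0" and eig: "V X = csmult (complex_of_real \<mu>) X"
  shows "\<mu> \<le> 1"
proof -
  have eig2: "V (adj X) = csmult (complex_of_real \<mu>) (adj X)"
    using adj_pres[OF V(1,2)] eig by (simp add: adj_csmult)
  define H1 where "H1 = X + adj X"
  define H2 where "H2 = csmult \<i> (X - adj X)"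
  have h1: "adj H1 = H1" by (simp add: H1_def adj_add add.commute)
  have h2: "adj H2 = H2" by (simp add: H2_def adj_csmult adj_diff vec_eq_iff field_simps)
  have e1: "V H1 = csmult (complex_of_real \<mu>) H1"
    using eig eig2 by (simp add: H1_def clin_add[OF V(1)] csmult_add)
  have e2: "V H2 = csmult (complex_of_real \<mu>) H2"
    using eig eig2 by (simp add: H2_def clin_diff[OF V(1)] clin_csmult[OF V(1)] csmult_diff mult.commute)
  have "H1 \<noteq> 0 \<or> H2 \<noteq> 0"
  proof (rule ccontr)
    assume "\<not> (H1 \<noteq> 0 \<or> H2 \<noteq> 0)"
    then have z1: "H1 = 0" and z2: "H2 = 0" by auto
    have "X - adj X = csmult (-\<i>) H2" by (simp add: H2_def)
    then have a: "X - adj X = 0" using z2 by simp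
    then have xa: "adj X = X" by simp
    have "X + X = 0" using z1 xa by (simp add: H1_def)
    then have "\<forall>i j. X$i$j + X$i$j = 0" by (simp add: vec_eq_iff)
    then have "X = 0" by (simp add: vec_eq_iff)
    then show False using X by simp
  qed
  then show ?thesis using eig_le1_herm[OF V h1 _ e1] eig_le1_herm[OF V h2 _ e2] by blast
qed

lemma zero_deriv_const:
  fixes y :: "real \<Rightarrow> 'a::real_normed_vector"
  assumes "\<And>t. t \<in> {0..T} \<Longrightarrow> (y has_vector_derivative 0) (at t within {0..T})"
    and "t \<in> {0..T}"
  shows "y t = y 0"
proof -
  have "\<exists>c. \<forall>x\<in>{0..T}. y x = c"
    by (rule has_derivative_zero_constant) (use assms(1) in \<open>auto simp: has_vector_derivative_def\<close>)
  then obtain c where "\<forall>x\<in>{0..T}. y x = c" by blast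
  moreover have "0 \<in> {0..T}" using assms(2) by simp
  ultimately show ?thesis using assms(2) by simp
qed

lemma scalar_ode_zero:
  fixes m c :: "real \<Rightarrow> complex"
  assumes mc: "continuous_on {0..T} m"
    and dc: "\<And>t. t \<in> {0..T} \<Longrightarrow> (c has_vector_derivative (m t * c t)) (at t within {0..T})"
    and c0: "c 0 = 0" and t: "t \<in> {0..T}"
  shows "c t = 0"
proof -
  define I where "I = (\<lambda>u. integral {0..u} m)"
  define E where "E = (\<lambda>u. exp (- I u))"
  have dI: "(I has_vector_derivative m u) (at u within {0..T})" if "u \<in> {0..T}" for u
    unfolding I_def by (rule integral_has_vector_derivative[OF mc that])
  have dE: "(E has_vector_derivative (- m u * E u)) (at u within {0..T})" if "u \<in> {0..T}" for u
  proof -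
    have "((\<lambda>v. - I v) has_vector_derivative - m u) (at u within {0..T})"
      using dI[OF that] by (rule has_vector_derivative_minus)
    from field_vector_diff_chain_within[OF this, of exp "exp (- I u)"]
    have "((exp \<circ> (\<lambda>v. - I v)) has_vector_derivative (- m u * exp (- I u))) (at u within {0..T})"
      by (auto intro: DERIV_exp has_field_derivative_at_within)
    then show ?thesis by (simp add: E_def o_def)
  qed
  have "((\<lambda>u. c u * E u) has_vector_derivative 0) (at u within {0..T})" if "u \<in> {0..T}" for u
  proof -
    have "((\<lambda>u. c u * E u) has_vector_derivative (c u * (- m u * E u) + (m u * c u) * E u)) (at u within {0..T})"
      by (rule has_vector_derivative_mult[OF dc[OF that] dE[OF that]])
    then show ?thesis by (simp add: algebra_simps)
  qed
  then have "c t * E t = c 0 * E 0" using zero_deriv_const[of T "\<lambda>u. c u * E u" t] t by blast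
  then have "c t * E t = 0" using c0 by simp
  moreover have "E t \<noteq> 0" by (simp add: E_def)
  ultimately show ?thesis by simp
qed

lemma deriv_antimono:
  fixes f :: "real \<Rightarrow> real"
  assumes df: "(f has_real_derivative D) (at t within {0..T})"
    and t: "t \<in> {0..T}" and T: "T > 0"
    and mono: "\<And>x y. x \<in> {0..T} \<Longrightarrow> y \<in> {0..T} \<Longrightarrow> x \<le> y \<Longrightarrow> f y \<le> f x"
  shows "D \<le> 0"
proof -
  have lim: "((\<lambda>y. (f y - f t) / (y - t)) \<longlongrightarrow> D) (at t within {0..T})"
    using df by (simp add: has_field_derivative_iff)
  have nb: "at t within {0..T} \<noteq> bot"
    using t T by (simp add: trivial_limit_within islimpt_Icc)
  have ev: "eventually (\<lambda>y. (f y - f t) / (y - t) \<le> 0) (at t within {0..T})"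
    unfolding eventually_at_filter
  proof (rule always_eventually, intro allI impI)
    fix y assume y: "y \<noteq> t" "y \<in> {0..T}"
    show "(f y - f t) / (y - t) \<le> 0"
    proof (cases "y < t")
      case True
      then have "f t \<le> f y" using mono[of y t] y t by simp
      then show ?thesis using True by (simp add: divide_nonneg_neg)
    next
      case False
      then have "t < y" using y by simp
      then have "f y \<le> f t" using mono[of t y] y t by simp
      then show ?thesis using \<open>t < y\<close> by (simp add: divide_nonpos_pos)
    qed
  qed
  show ?thesis by (rule tendsto_upperbound[OF lim ev nb])
qed

lemma integral_flip:
  fixes f :: "real \<Rightarrow> 'a::banach"
  assumes "f integrable_on {0..t}"
  shows "integral {0..t} (\<lambda>s. f (t - s)) = integral {0..t} f"
proof -
  obtain i where i: "(f has_integral i) (cbox 0 t)" using assms by (auto simp: integrable_on_def)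
  have "((\<lambda>x. f ((-1) *\<^sub>R x + t)) has_integral (1 / (\<bar>-1\<bar> ^ DIM(real))) *\<^sub>R i)
         ((\<lambda>x. (1 / (-1)) *\<^sub>R x + -((1 / (-1)) *\<^sub>R t)) ` cbox 0 t)"
    by (rule has_integral_affinity[OF i]) simp
  moreover have "(\<lambda>x. (1 / (-1)) *\<^sub>R x + -((1 / (-1)) *\<^sub>R t)) ` cbox 0 t = {0..t}"
  proof -
    have "(\<lambda>x::real. (1 / (-1)) *\<^sub>R x + -((1 / (-1)) *\<^sub>R t)) = (\<lambda>x. t - x)" by auto
    moreover have "(\<lambda>x. t - x) ` {0..t} = {0..t}"
      by (auto simp: image_iff intro!: bexI[where x="t - _"])
    ultimately show ?thesis by simp
  qed
  ultimately have "((\<lambda>s. f (t - s)) has_integral i) {0..t}" by simp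
  then show ?thesis using i by (simp add: integral_unique)
qed

lemma hs_self_nz: assumes "X \<noteq> 0" shows "trace (adj X ** X) \<noteq> 0"
proof -
  obtain i k where ik: "X $ k $ i \<noteq> 0" using assms by (metis vec_eq_iff zero_index)
  have "Re (trace (adj X ** X)) = (\<Sum>i\<in>UNIV. \<Sum>k\<in>UNIV. (cmod (X $ k $ i))^2)"
    unfolding hs_expand by (simp add: cnj_mult_self Re_sum)
  also have "\<dots> > 0"
  proof (rule sum_pos2[of _ i])
    show "0 < (\<Sum>k\<in>UNIV. (cmod (X $ k $ i))^2)"
      by (rule sum_pos2[of _ k]) (use ik in auto)
  qed (auto intro: sum_nonneg)
  finally show ?thesis by auto
qed

theorem corollary4:
  fixes \<psi> :: "nat \<Rightarrow> nat \<Rightarrow> complex^'n::finite"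
    and \<gamma> :: "nat \<Rightarrow> real \<Rightarrow> real"
    and \<Lambda> :: "real \<Rightarrow> 'n supop"
    and KNZ :: "real \<Rightarrow> 'n supop"
    and A :: "'i set"
    and \<sigma> \<tau> :: "'i \<Rightarrow> 'n cmat"
    and mTCL :: "'i \<Rightarrow> real \<Rightarrow> complex"
  defines "d \<equiv> CARD('n)"
  defines "U \<equiv> (\<lambda>\<alpha>. pauli_unitary (\<psi> \<alpha>))"
  defines "KTCL \<equiv> (\<lambda>t \<rho>. (\<Sum>\<alpha>\<in>{1..d+1}. csmult (complex_of_real (\<gamma> \<alpha> t)) (pauli_L (U \<alpha>) \<rho>)))"
  defines "G \<equiv> (\<lambda>\<alpha> t. vector_derivative (\<lambda>s. exp (integral {0..s} (mTCL \<alpha>))) (at t))"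
  defines "mRed \<equiv> (\<lambda>\<alpha> t. trace (adj (\<sigma> \<alpha>) ** integral {0..t} (\<lambda>s. KNZ s (\<tau> \<alpha>))))"
  assumes d_ge: "d \<ge> 2"
    \<comment> \<open>d+1 mutually unbiased bases and the generalized Pauli unitaries built from them\<close>
  assumes onb: "\<And>\<alpha>. \<alpha> \<in> {1..d+1} \<Longrightarrow> orthonormal_basis (\<psi> \<alpha>)"
  assumes mub: "\<And>\<alpha> \<beta>. \<alpha> \<in> {1..d+1} \<Longrightarrow> \<beta> \<in> {1..d+1} \<Longrightarrow> \<alpha> \<noteq> \<beta> \<Longrightarrow> mutually_unbiased (\<psi> \<alpha>) (\<psi> \<beta>)"
    \<comment> \<open>regular rates\<close>
  assumes \<gamma>_cont: "\<And>\<alpha>. \<alpha> \<in> {1..d+1} \<Longrightarrow> continuous_on {0..} (\<gamma> \<alpha>)"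
    \<comment> \<open>time-local (TCL) master equation\<close>
  assumes \<Lambda>0: "\<Lambda> 0 = id"
  assumes TCL: "\<And>t \<rho>. t \<ge> 0 \<Longrightarrow>
      ((\<lambda>s. \<Lambda> s \<rho>) has_vector_derivative KTCL t (\<Lambda> t \<rho>)) (at t within {0..})"
    \<comment> \<open>Nakajima-Zwanzig equation with memory kernel KNZ\<close>
  assumes KNZ_lin: "\<And>t. clinear_map (KNZ t)"
  assumes KNZ_int: "\<And>t X. t \<ge> 0 \<Longrightarrow> (\<lambda>s. KNZ s X) integrable_on {0..t}"
  assumes NZ: "\<And>t \<rho>. t \<ge> 0 \<Longrightarrow>
      (\<lambda>s. KNZ (t - s) (\<Lambda> s \<rho>)) integrable_on {0..t} \<and>
      ((\<lambda>s. \<Lambda> s \<rho>) has_vector_derivative integral {0..t} (\<lambda>s. KNZ (t - s) (\<Lambda> s \<rho>))) (at t within {0..})"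
    \<comment> \<open>time-independent eigen-decomposition of KTCL into rank-one maps\<close>
  assumes A_fin: "finite A" and A_card: "card A = d^2"
  assumes biorth: "\<And>\<alpha> \<beta>. \<alpha> \<in> A \<Longrightarrow> \<beta> \<in> A \<Longrightarrow> trace (adj (\<sigma> \<alpha>) ** \<tau> \<beta>) = (if \<alpha> = \<beta> then 1 else 0)"
  assumes decomp: "\<And>t \<omega>. t \<ge> 0 \<Longrightarrow>
      KTCL t \<omega> = (\<Sum>\<alpha>\<in>A. csmult (mTCL \<alpha> t) (rank1_map (\<sigma> \<alpha>) (\<tau> \<alpha>) \<omega>))"
    \<comment> \<open>Laplace transforms of G_alpha have modulus < 1\<close>
  assumes laplace: "\<And>\<alpha> u. \<alpha> \<in> A \<Longrightarrow> u > 0 \<Longrightarrow>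
      (\<lambda>t. exp (- (u * t)) *\<^sub>R G \<alpha> t) integrable_on {0..} \<and>
      cmod (integral {0..} (\<lambda>t. exp (- (u * t)) *\<^sub>R G \<alpha> t)) < 1"
    \<comment> \<open>some Redfield eigenvalue is (real and) positive\<close>
  assumes pos: "\<exists>\<alpha>\<in>A. \<exists>t\<ge>0. Im (mRed \<alpha> t) = 0 \<and> Re (mRed \<alpha> t) > 0"
  shows "\<not> P_divisible \<Lambda>"
proof
  assume Pdiv: "P_divisible \<Lambda>"
  obtain \<alpha>0 t0 where a0: "\<alpha>0 \<in> A" and t0: "t0 \<ge> 0"
    and imR: "Im (mRed \<alpha>0 t0) = 0" and reR: "Re (mRed \<alpha>0 t0) > 0"
    using pos by blast
  define \<sigma>0 where "\<sigma>0 = \<sigma> \<alpha>0"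
  define \<tau>0 where "\<tau>0 = \<tau> \<alpha>0"
  have Kform: "KTCL t \<omega> = (\<Sum>\<alpha>\<in>A. csmult (mTCL \<alpha> t * trace (adj (\<sigma> \<alpha>) ** \<omega>)) (\<tau> \<alpha>))"
    if "t \<ge> 0" for t \<omega>
    using decomp[OF that] by (simp add: rank1_map_def)
  have Keig: "KTCL t (\<tau> \<beta>) = csmult (mTCL \<beta> t) (\<tau> \<beta>)" if "t \<ge> 0" "\<beta> \<in> A" for t \<beta>
  proof -
    have "KTCL t (\<tau> \<beta>) = (\<Sum>\<alpha>\<in>A. if \<alpha> = \<beta> then csmult (mTCL \<beta> t) (\<tau> \<beta>) else 0)"
      unfolding Kform[OF that(1)] using biorth[OF _ that(2)] by (intro sum.cong) auto
    then show ?thesis using that(2) A_fin by simp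
  qed
  have Kadd: "KTCL t (X + Y) = KTCL t X + KTCL t Y" if "t \<ge> 0" for t X Y
    by (simp add: Kform[OF that] hs_add distrib_left csmult_add_left sum.distrib)
  have Kcs: "KTCL t (csmult c X) = csmult c (KTCL t X)" if "t \<ge> 0" for t c X
    by (simp add: Kform[OF that] hs_csmult csmult_sum mult_ac)
  have tau_nz: "\<tau> \<beta> \<noteq> 0" if "\<beta> \<in> A" for \<beta>
    using biorth[OF that that] by auto
  have hs_eig: "trace (adj (\<sigma> \<beta>) ** KTCL t (\<tau> \<beta>)) = mTCL \<beta> t" if "t \<ge> 0" "\<beta> \<in> A" for t \<beta>
    using Keig[OF that] biorth[OF that(2) that(2)] by (simp add: hs_csmult)
  have onbU: "hs_sa (pauli_L (U a))" if "a \<in> {1..d+1}" for a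
    unfolding U_def using pauli_L_sa[OF onb[OF that]] .
  have Ksa: "trace (adj X ** KTCL t Y) = trace (adj (KTCL t X) ** Y)" for t X Y
  proof -
    have "trace (adj X ** KTCL t Y) = (\<Sum>a\<in>{1..d+1}. complex_of_real (\<gamma> a t) * trace (adj X ** pauli_L (U a) Y))"
      unfolding KTCL_def by (simp only: hs_sum hs_csmult)
    also have "\<dots> = (\<Sum>a\<in>{1..d+1}. cnj (complex_of_real (\<gamma> a t)) * trace (adj (pauli_L (U a) X) ** Y))"
      using onbU unfolding hs_sa_def by (intro sum.cong) auto
    also have "\<dots> = trace (adj (KTCL t X) ** Y)"
      unfolding KTCL_def by (simp only: hs_sum_left hs_csmult_left)
    finally show ?thesis .
  qed
  have mreal: "Im (mTCL \<alpha>0 t) = 0" if "t \<ge> 0" for t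
  proof -
    have "mTCL \<alpha>0 t * trace (adj \<tau>0 ** \<tau>0) = trace (adj \<tau>0 ** KTCL t \<tau>0)"
      using Keig[OF that a0] by (simp add: \<tau>0_def hs_csmult)
    also have "\<dots> = trace (adj (KTCL t \<tau>0) ** \<tau>0)" by (rule Ksa)
    also have "\<dots> = cnj (mTCL \<alpha>0 t) * trace (adj \<tau>0 ** \<tau>0)"
      using Keig[OF that a0] by (simp add: \<tau>0_def hs_csmult_left)
    finally have "(mTCL \<alpha>0 t - cnj (mTCL \<alpha>0 t)) * trace (adj \<tau>0 ** \<tau>0) = 0"
      by (simp add: algebra_simps)
    moreover have "trace (adj \<tau>0 ** \<tau>0) \<noteq> 0"
      using hs_self_nz tau_nz[OF a0] unfolding \<tau>0_def by blast
    ultimately have "mTCL \<alpha>0 t = cnj (mTCL \<alpha>0 t)" by simp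
    then show ?thesis by (metis Reals_cnj_iff complex_is_Real_iff)
  qed
  have mcont: "continuous_on {0..} (mTCL \<beta>)" if "\<beta> \<in> A" for \<beta>
  proof -
    have "mTCL \<beta> t = (\<Sum>a\<in>{1..d+1}. complex_of_real (\<gamma> a t) * trace (adj (\<sigma> \<beta>) ** pauli_L (U a) (\<tau> \<beta>)))"
      if "t \<in> {0..}" for t
    proof -
      have "mTCL \<beta> t = trace (adj (\<sigma> \<beta>) ** KTCL t (\<tau> \<beta>))"
        using hs_eig[of t \<beta>] that \<open>\<beta> \<in> A\<close> by simp
      also have "\<dots> = (\<Sum>a\<in>{1..d+1}. complex_of_real (\<gamma> a t) * trace (adj (\<sigma> \<beta>) ** pauli_L (U a) (\<tau> \<beta>)))"
        unfolding KTCL_def by (simp only: hs_sum hs_csmult)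
      finally show ?thesis .
    qed
    moreover have "continuous_on {0..} (\<lambda>t. \<Sum>a\<in>{1..d+1}. complex_of_real (\<gamma> a t) * trace (adj (\<sigma> \<beta>) ** pauli_L (U a) (\<tau> \<beta>)))"
      using \<gamma>_cont by (intro continuous_intros) auto
    ultimately show ?thesis using continuous_on_cong by (metis (no_types, lifting))
  qed
  define mr where "mr = (\<lambda>t. Re (mTCL \<alpha>0 t))"
  have mof: "mTCL \<alpha>0 t = complex_of_real (mr t)" if "t \<ge> 0" for t
    using mreal[OF that] by (simp add: mr_def complex_eq_iff)
  have mrcont: "continuous_on {0..} mr"
    unfolding mr_def using mcont[OF a0] by (intro continuous_intros)
  define T where "T = t0 + 1"
  have T0: "T > 0" using t0 by (simp add: T_def)
  have subT: "{0..T} \<subseteq> {0..}" by auto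
  define lam where "lam = (\<lambda>t. exp (integral {0..t} mr))"
  have lam_pos: "lam t > 0" for t by (simp add: lam_def)
  have lam0: "lam 0 = 1" by (simp add: lam_def)
  have dlam: "(lam has_real_derivative (mr t * lam t)) (at t within {0..T})" if "t \<in> {0..T}" for t
  proof -
    have c: "continuous_on {0..T} mr" using continuous_on_subset[OF mrcont subT] .
    have "((\<lambda>u. integral {0..u} mr) has_vector_derivative mr t) (at t within {0..T})"
      by (rule integral_has_vector_derivative[OF c that])
    from field_vector_diff_chain_within[OF this, of exp "exp (integral {0..t} mr)"]
    have "((exp \<circ> (\<lambda>u. integral {0..u} mr)) has_vector_derivative (mr t * exp (integral {0..t} mr))) (at t within {0..T})"
      by (auto intro: DERIV_exp has_field_derivative_at_within)
    then show ?thesis by (simp add: lam_def o_def has_real_derivative_iff_has_vector_derivative)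
  qed
  define L where "L = (\<lambda>t. lam t *\<^sub>R \<tau>0)"
  have L_cs: "L t = csmult (complex_of_real (lam t)) \<tau>0" for t
    by (simp add: L_def csmult_of_real)
  have KL: "KTCL t (L t) = (mr t * lam t) *\<^sub>R \<tau>0" if "t \<ge> 0" for t
    using that by (simp add: L_cs Kcs Keig[OF _ a0, folded \<tau>0_def] mof csmult_of_real[symmetric] mult.commute)
  define y where "y = (\<lambda>t. \<Lambda> t \<tau>0 - L t)"
  have dL: "(L has_vector_derivative ((mr t * lam t) *\<^sub>R \<tau>0)) (at t within {0..T})" if "t \<in> {0..T}" for t
    unfolding L_def using has_vector_derivative_scaleR[OF dlam[OF that] has_vector_derivative_const[of \<tau>0]]
    by simp
  have dy: "(y has_vector_derivative KTCL t (y t)) (at t within {0..T})" if "t \<in> {0..T}" for t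
  proof -
    have t: "t \<ge> 0" using that by simp
    have dx: "((\<lambda>s. \<Lambda> s \<tau>0) has_vector_derivative KTCL t (\<Lambda> t \<tau>0)) (at t within {0..T})"
      using has_vector_derivative_within_subset[OF TCL[OF t] subT] .
    have "(y has_vector_derivative (KTCL t (\<Lambda> t \<tau>0) - (mr t * lam t) *\<^sub>R \<tau>0)) (at t within {0..T})"
      unfolding y_def by (rule has_vector_derivative_diff[OF dx dL[OF that]])
    moreover have "KTCL t (\<Lambda> t \<tau>0) - (mr t * lam t) *\<^sub>R \<tau>0 = KTCL t (y t)"
    proof -
      have "\<Lambda> t \<tau>0 = y t + L t" by (simp add: y_def)
      then have "KTCL t (\<Lambda> t \<tau>0) = KTCL t (y t) + KTCL t (L t)" using Kadd[OF t] by simp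
      then show ?thesis using KL[OF t] by simp
    qed
    ultimately show ?thesis by simp
  qed
  have y0: "y 0 = 0"
    by (simp add: y_def \<Lambda>0 L_def lam0)
  have coord0: "trace (adj (\<sigma> \<beta>) ** y t) = 0" if "\<beta> \<in> A" "t \<in> {0..T}" for \<beta> t
  proof (rule scalar_ode_zero[where m="mTCL \<beta>" and T=T])
    show "continuous_on {0..T} (mTCL \<beta>)" using continuous_on_subset[OF mcont[OF that(1)] subT] .
    show "(\<lambda>t. trace (adj (\<sigma> \<beta>) ** y t)) 0 = 0" using y0 by simp
    show "t \<in> {0..T}" by fact
    fix u assume u: "u \<in> {0..T}"
    have "((\<lambda>t. trace (adj (\<sigma> \<beta>) ** y t)) has_vector_derivative trace (adj (\<sigma> \<beta>) ** KTCL u (y u))) (at u within {0..T})"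
      using bounded_linear.has_vector_derivative[OF hs_bounded_linear dy[OF u]] .
    moreover have "trace (adj (\<sigma> \<beta>) ** KTCL u (y u)) = mTCL \<beta> u * trace (adj (\<sigma> \<beta>) ** y u)"
    proof -
      have "trace (adj (\<sigma> \<beta>) ** KTCL u (y u)) = (\<Sum>\<alpha>\<in>A. mTCL \<alpha> u * trace (adj (\<sigma> \<alpha>) ** y u) * trace (adj (\<sigma> \<beta>) ** \<tau> \<alpha>))"
        using u by (simp add: Kform hs_sum hs_csmult)
      also have "\<dots> = (\<Sum>\<alpha>\<in>A. if \<alpha> = \<beta> then mTCL \<beta> u * trace (adj (\<sigma> \<beta>) ** y u) else 0)"
        using biorth[OF that(1)] by (intro sum.cong) auto
      also have "\<dots> = mTCL \<beta> u * trace (adj (\<sigma> \<beta>) ** y u)" using that(1) A_fin by simp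
      finally show ?thesis .
    qed
    ultimately show "((\<lambda>t. trace (adj (\<sigma> \<beta>) ** y t)) has_vector_derivative
        mTCL \<beta> u * (\<lambda>t. trace (adj (\<sigma> \<beta>) ** y t)) u) (at u within {0..T})" by simp
  qed
  have yzero: "y t = 0" if "t \<in> {0..T}" for t
  proof -
    have "(y has_vector_derivative 0) (at u within {0..T})" if "u \<in> {0..T}" for u
    proof -
      have "KTCL u (y u) = 0"
        using that coord0[OF _ that] by (simp add: Kform)
      then show ?thesis using dy[OF that] by simp
    qed
    then have "y t = y 0" using zero_deriv_const that by blast
    then show ?thesis using y0 by simp
  qed
  have LamL: "\<Lambda> t \<tau>0 = L t" if "t \<in> {0..T}" for t
    using yzero[OF that] by (simp add: y_def)
  have lam_mono: "lam t \<le> lam s" if st: "s \<in> {0..T}" "t \<in> {0..T}" "s \<le> t" for s t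
  proof -
    obtain V where V: "clinear_map V" "positive_map V" "trace_preserving V" and LV: "\<Lambda> t = V \<circ> \<Lambda> s"
      using Pdiv st unfolding P_divisible_def by auto
    have "csmult (complex_of_real (lam t)) \<tau>0 = V (csmult (complex_of_real (lam s)) \<tau>0)"
      using LamL[OF st(2)] LamL[OF st(1)] LV by (simp add: L_cs)
    also have "\<dots> = csmult (complex_of_real (lam s)) (V \<tau>0)" by (rule clin_csmult[OF V(1)])
    finally have e: "csmult (complex_of_real (lam t)) \<tau>0 = csmult (complex_of_real (lam s)) (V \<tau>0)" .
    have "V \<tau>0 = csmult (complex_of_real (1 / lam s)) (csmult (complex_of_real (lam s)) (V \<tau>0))"
      using lam_pos[of s] by simp
    also have "\<dots> = csmult (complex_of_real (lam t / lam s)) \<tau>0"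
      unfolding e[symmetric] by simp
    finally have "V \<tau>0 = csmult (complex_of_real (lam t / lam s)) \<tau>0" .
    then have "lam t / lam s \<le> 1" using eig_le1[OF V] tau_nz[OF a0] unfolding \<tau>0_def by blast
    then show ?thesis using lam_pos[of s] by (simp add: divide_le_eq_1)
  qed
  have mr_nonpos: "mr t \<le> 0" if "t \<in> {0..T}" for t
  proof -
    have "mr t * lam t \<le> 0"
      by (rule deriv_antimono[OF dlam[OF that] that T0]) (auto intro: lam_mono)
    then show ?thesis using lam_pos[of t] by (simp add: mult_le_0_iff)
  qed
  define h where "h = (\<lambda>X. Re (trace (adj \<sigma>0 ** X)))"
  have hbl: "bounded_linear h"
    unfolding h_def using bounded_linear_compose[OF bounded_linear_Re hs_bounded_linear] .
  define kr where "kr = (\<lambda>r. h (KNZ r \<tau>0))"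
  have kr_int: "kr integrable_on {0..t}" if "t \<ge> 0" for t
    using integrable_linear[OF KNZ_int[OF that] hbl] by (simp add: kr_def o_def)
  have hsig: "h \<tau>0 = 1" using biorth[OF a0 a0] by (simp add: h_def \<sigma>0_def \<tau>0_def)
  have Grel: "integral {0..t} (\<lambda>r. lam (t - r) * kr r) = mr t * lam t" if "t \<in> {0..T}" for t
  proof -
    have t: "t \<ge> 0" using that by simp
    have nb: "at t within {0..T} \<noteq> bot"
      using that T0 by (simp add: trivial_limit_within islimpt_Icc)
    have d1: "((\<lambda>s. \<Lambda> s \<tau>0) has_vector_derivative KTCL t (\<Lambda> t \<tau>0)) (at t within {0..T})"
      using has_vector_derivative_within_subset[OF TCL[OF t] subT] .
    have d2: "((\<lambda>s. \<Lambda> s \<tau>0) has_vector_derivative integral {0..t} (\<lambda>s. KNZ (t - s) (\<Lambda> s \<tau>0))) (at t within {0..T})"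
      using has_vector_derivative_within_subset[OF conjunct2[OF NZ[OF t]] subT] .
    have eq1: "integral {0..t} (\<lambda>s. KNZ (t - s) (\<Lambda> s \<tau>0)) = (mr t * lam t) *\<^sub>R \<tau>0"
      using vector_derivative_unique_within[OF nb d2 d1] LamL[OF that] KL[OF t] by simp
    have fe: "KNZ (t - s) (\<Lambda> s \<tau>0) = lam s *\<^sub>R KNZ (t - s) \<tau>0" if "s \<in> {0..t}" for s
    proof -
      have "s \<in> {0..T}" using that \<open>t \<in> {0..T}\<close> by auto
      then have "\<Lambda> s \<tau>0 = csmult (complex_of_real (lam s)) \<tau>0" using LamL L_cs by simp
      then have "KNZ (t - s) (\<Lambda> s \<tau>0) = csmult (complex_of_real (lam s)) (KNZ (t - s) \<tau>0)"
        using clin_csmult[OF KNZ_lin] by simp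
      then show ?thesis by (simp only: csmult_of_real)
    qed
    have int1: "(\<lambda>s. lam s *\<^sub>R KNZ (t - s) \<tau>0) integrable_on {0..t}"
      using integrable_eq[OF conjunct1[OF NZ[OF t]] fe] .
    have "integral {0..t} (\<lambda>s. lam s *\<^sub>R KNZ (t - s) \<tau>0) = (mr t * lam t) *\<^sub>R \<tau>0"
    proof -
      have "integral {0..t} (\<lambda>s. KNZ (t - s) (\<Lambda> s \<tau>0)) = integral {0..t} (\<lambda>s. lam s *\<^sub>R KNZ (t - s) \<tau>0)"
        by (rule integral_cong) (rule fe)
      then show ?thesis using eq1 by simp
    qed
    then have "h (integral {0..t} (\<lambda>s. lam s *\<^sub>R KNZ (t - s) \<tau>0)) = mr t * lam t"
      using hsig linear_scale[OF bounded_linear.linear[OF hbl]] by simp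
    moreover have "h (integral {0..t} (\<lambda>s. lam s *\<^sub>R KNZ (t - s) \<tau>0)) = integral {0..t} (\<lambda>s. lam s * kr (t - s))"
      using integral_linear[OF int1 hbl] linear_scale[OF bounded_linear.linear[OF hbl]]
      by (simp add: o_def kr_def)
    moreover have "(\<lambda>s. lam s * kr (t - s)) integrable_on {0..t}"
      using integrable_linear[OF int1 hbl] linear_scale[OF bounded_linear.linear[OF hbl]]
      by (simp add: o_def kr_def)
    ultimately have "integral {0..t} (\<lambda>s. lam s * kr (t - s)) = mr t * lam t"
      and ii: "(\<lambda>s. lam s * kr (t - s)) integrable_on {0..t}" by auto
    moreover have "integral {0..t} (\<lambda>r. (\<lambda>s. lam s * kr (t - s)) (t - r)) = integral {0..t} (\<lambda>s. lam s * kr (t - s))"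
      by (rule integral_flip[OF ii])
    ultimately show ?thesis by simp
  qed
  define Kr where "Kr = (\<lambda>t. integral {0..t} kr)"
  have Kr_t0: "Kr t0 > 0"
  proof -
    have "Re (mRed \<alpha>0 t0) = h (integral {0..t0} (\<lambda>s. KNZ s \<tau>0))"
      by (simp add: mRed_def h_def \<sigma>0_def \<tau>0_def)
    also have "\<dots> = Kr t0"
      using integral_linear[OF KNZ_int[OF t0] hbl] by (simp add: Kr_def kr_def o_def)
    finally show ?thesis using reR by simp
  qed
  have Kcont: "continuous_on {0..t0} Kr"
    unfolding Kr_def by (rule indefinite_integral_continuous_1[OF kr_int[OF t0]])
  obtain ts where ts: "ts \<in> {0..t0}" and tsmax: "\<And>u. u \<in> {0..t0} \<Longrightarrow> Kr u \<le> Kr ts"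
    using continuous_attains_sup[OF compact_Icc _ Kcont] t0 by auto
  have tsT: "ts \<in> {0..T}" using ts by (auto simp: T_def)
  have Mpos: "Kr ts > 0" using tsmax[of t0] t0 Kr_t0 by auto
  have ts0: "ts \<ge> 0" using ts by simp
  obtain c where c: "c \<in> {0..ts}"
    and smv: "integral {0..ts} (\<lambda>x. lam (ts - x) * kr x) = lam (ts - 0) * integral {0..c} kr + lam (ts - ts) * integral {c..ts} kr"
  proof (rule second_mean_value_theorem[OF kr_int[OF ts0] ts0])
    fix x y assume "0 \<le> x" "x \<le> y" "y \<le> ts"
    then show "lam (ts - x) \<le> lam (ts - y)"
      using tsT by (intro lam_mono) auto
  qed auto
  have split: "integral {c..ts} kr = Kr ts - Kr c"
    using Henstock_Kurzweil_Integration.integral_combine[where a=0 and c=c and b=ts and f=kr] c kr_int[OF ts0] by (simp add: Kr_def algebra_simps)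
  have lhs: "mr ts * lam ts \<le> 0"
    using mr_nonpos[OF tsT] lam_pos[of ts] by (simp add: mult_le_0_iff)
  have Kc: "Kr c \<le> Kr ts" using c ts by (intro tsmax) auto
  have lts: "lam ts \<le> 1" using lam_mono[of 0 ts] tsT lam0 by auto
  have eq: "mr ts * lam ts = lam ts * Kr c + (Kr ts - Kr c)"
    using Grel[OF tsT] smv split lam0 by (simp add: Kr_def)
  have "(1 - lam ts) * Kr c \<le> (1 - lam ts) * Kr ts"
    using lts Kc by (intro mult_left_mono) auto
  moreover have "lam ts * Kr ts > 0" using lam_pos[of ts] Mpos by simp
  ultimately show False using eq lhs by (simp add: algebra_simps)
qed

end
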